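(* Under the assumptions below, the eigenvalues $\widetilde{\lambda}_n$ of the differential operator $\mathbf{L}$ associated with the polynomials $q_n$ orthonormal with respect to the discrete Sobolev inner product $(f,g)_S$ satisfy: If $j=2r$, $$\lim_{n\to+\infty}\frac{\widetilde{\lambda}_{2r+2n}}{n^{2(a_1r+b_1)+3}}=\frac{8\gamma MC_{r,1}^2}{(2(a_1r+b_1)+3)(2(a_1r+b_1)+1)}\ \text{if }\gamma\neq0,\qquad \lim_{n\to+\infty}\frac{\widetilde{\lambda}_{2r+2n}}{n^{2(a_1r+b_1+1)}}=\frac{\delta MC_{r,1}^2}{(a_1r+b_1+1)(2(a_1r+b_1)+1)}\ \text{if }\gamma=0.$$ If $j=2r+1$, $$\lim_{n\to+\infty}\frac{\widetilde{\lambda}_{2r+1+2n}}{n^{2(a_2r+b_2)+3}}=\frac{8\gamma MC_{r,2}^2}{(2(a_2r+b_2)+3)(2(a_2r+b_2)+1)}\ \text{if }\gamma\neq0,\qquad \lim_{n\to+\infty}\frac{\widetilde{\lambda}_{2r+1+2n}}{n^{2(a_2r+b_2+1)}}=\frac{\delta MC_{r,2}^2}{(a_2r+b_2+1)(2(a_2r+b_2)+1)}\ \text{if }\gamma=0.$$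
   Context: Let $\mu$ be a classical measure on the real line symmetric with respect to the origin, $d\mu(x)=w(x)dx$ (e.g. Hermite weight $e^{-x^2}$ or Gegenbauer weight $(1-x^2)^{\alpha}$, $\alpha>-1$), take $c=0$, and consider the discrete Sobolev inner product $(f,g)_S=\int f(x)g(x)\,d\mu+Mf^{(j)}(0)g^{(j)}(0)$ with $j\in\mathbb{N}\cup\{0\}$ and $M>0$. Let $\{p_n\}_{n\ge0}$ be the orthonormal polynomials with respect to $\mu$, eigenfunctions of the operator $\mathbf{B}=\sigma(x)\mathcal{D}^2+\tau(x)\mathcal{D}$ with eigenvalues $\lambda_n$, and let $\{q_n\}_{n\ge0}$ be the orthonormal polynomials with respect to $(f,g)_S$, which are eigenfunctions of a differential operator $\mathbf{L}=\sum_{i\ge1}r_i(x)\mathcal{D}^i$ ($\deg r_i\le i$) with eigenvalues $\widetilde{\lambda}_n=\lambda_n+M\alpha_n$, where $\alpha_i=0$ for $i\in\{0,\dots,j\}$ and $\alpha_{j+2n}=\sum_{i=1}^n(\lambda_{j+2i}-\lambda_{j+2i-2})K_{j+2i-1}^{(j,j)}(0,0)$ for $n\ge1$, with $K_n^{(r,s)}(x,y)=\sum_{i=0}^np_i^{(r)}(x)p_i^{(s)}(y)$. Assume $p_{2n}^{(2k)}(0)\approx C_{k,1}(-1)^n n^{a_1k+b_1}$ and $p_{2n+1}^{(2k+1)}(0)\approx C_{k,2}(-1)^n n^{a_2k+b_2}$ (where $a_n\approx b_n$ means $a_n/b_n\to1$), with constants $C_{k,1},C_{k,2}$ independent of $n$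 and $2(a_1k+b_1)+1>0$, $2(a_2k+b_2)+1>0$, and assume $\lambda_n=\gamma n^2+\delta n$ with $\gamma,\delta\in\mathbb{R}$. *)

theory Defs
  imports "HOL-Analysis.Analysis" "HOL-Computational_Algebra.Polynomial"
begin

definition kernel :: "(nat \<Rightarrow> real poly) \<Rightarrow> nat \<Rightarrow> nat \<Rightarrow> nat \<Rightarrow> real \<Rightarrow> real \<Rightarrow> real" where
  "kernel p n r s x y = (\<Sum>i=0..n. poly ((pderiv ^^ r) (p i)) x * poly ((pderiv ^^ s) (p i)) y)"

text \<open>alpha_{j+2n} = sum_{i=1}^n (lambda_{j+2i} - lambda_{j+2i-2}) K_{j+2i-1}^{(j,j)}(0,0)
  (for n = 0 this is the empty sum, agreeing with alpha_j = 0).\<close>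
definition sob_alpha :: "(nat \<Rightarrow> real poly) \<Rightarrow> (nat \<Rightarrow> real) \<Rightarrow> nat \<Rightarrow> nat \<Rightarrow> real" where
  "sob_alpha p lam j n = (\<Sum>i=1..n. (lam (j + 2*i) - lam (j + 2*i - 2)) * kernel p (j + 2*i - 1) j j 0 0)"

definition lam_tilde :: "(nat \<Rightarrow> real poly) \<Rightarrow> (nat \<Rightarrow> real) \<Rightarrow> real \<Rightarrow> nat \<Rightarrow> nat \<Rightarrow> real" where
  "lam_tilde p lam M j n = lam (j + 2*n) + M * sob_alpha p lam j n"

end

theory Submission
  imports Defs "HOL-Real_Asymp.Real_Asymp"
begin


lemma reflect_integral:
  fixes w :: "real \<Rightarrow> real" and g :: "real \<Rightarrow> real"
  assumes w_meas: "w \<in> borel_measurable borel"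
    and w_nonneg: "\<And>x. w x \<ge> 0"
    and w_sym: "\<And>x. w (- x) = w x"
    and g: "g \<in> borel_measurable borel"
  shows "(\<integral>x. g x \<partial>(density lborel (\<lambda>x. ennreal (w x)))) =
         (\<integral>x. g (-x) \<partial>(density lborel (\<lambda>x. ennreal (w x))))"
proof -
  have gm: "(\<lambda>x. g (-x)) \<in> borel_measurable borel" using g by measurable
  have "(\<integral>x. g x \<partial>(density lborel (\<lambda>x. ennreal (w x)))) = (\<integral>x. w x * g x \<partial>lborel)"
    using integral_density[of g lborel w] g w_meas w_nonneg by simp
  also have "\<dots> = (\<integral>x. w (0 + (-1) * x) * g (0 + (-1) * x) \<partial>lborel)"
    using lborel_integral_real_affine[of "-1" "\<lambda>x. w x * g x" 0] by simp
  also have "\<dots> = (\<integral>x. w x * g (- x) \<partial>lborel)" using w_sym by simp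
  also have "\<dots> = (\<integral>x. g (-x) \<partial>(density lborel (\<lambda>x. ennreal (w x))))"
    using integral_density[of "\<lambda>x. g (-x)" lborel w] gm w_meas w_nonneg by simp
  finally show ?thesis .
qed



lemma span_p:
  fixes p :: "nat \<Rightarrow> real poly"
  assumes deg_p: "\<And>n. degree (p n) = n" and nz: "\<And>n. p n \<noteq> 0"
  shows "degree f \<le> N \<Longrightarrow> \<exists>c. f = (\<Sum>k\<le>N. smult (c k) (p k))"
proof (induction N arbitrary: f)
  case 0
  then obtain a where f: "f = [:a:]" by (metis degree_eq_zeroE le_zero_eq)
  have d0: "degree (p 0) = 0" using deg_p by simp
  then obtain b where b: "p 0 = [:b:]" by (metis degree_eq_zeroE)
  with nz have "b \<noteq> 0" by auto
  have "f = smult (a / b) (p 0)" using f b \<open>b \<noteq> 0\<close> by simp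
  then show ?case by (intro exI[of _ "\<lambda>_. a / b"]) simp
next
  case (Suc N)
  define l where "l = coeff f (Suc N) / coeff (p (Suc N)) (Suc N)"
  have lc: "coeff (p (Suc N)) (Suc N) \<noteq> 0"
    using nz deg_p by (metis leading_coeff_0_iff)
  define g where "g = f - smult l (p (Suc N))"
  have "degree g \<le> N"
  proof (rule degree_le, intro allI impI)
    fix i assume "N < i"
    show "coeff g i = 0"
    proof (cases "i = Suc N")
      case True then show ?thesis using lc by (simp add: g_def l_def)
    next
      case False
      then have "i > Suc N" using \<open>N < i\<close> by simp
      then have "coeff f i = 0" "coeff (p (Suc N)) i = 0"
        using Suc.prems deg_p by (auto intro: coeff_eq_0)
      then show ?thesis by (simp add: g_def)
    qed
  qed
  then obtain c where c: "g = (\<Sum>k\<le>N. smult (c k) (p k))" using Suc.IH by blast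
  define c' where "c' = c(Suc N := l)"
  have "f = g + smult l (p (Suc N))" by (simp add: g_def)
  also have "\<dots> = (\<Sum>k\<le>Suc N. smult (c' k) (p k))"
    by (simp add: c c'_def)
  finally show ?case by blast
qed

lemma parity_p:
  fixes w :: "real \<Rightarrow> real" and \<mu> :: "real measure" and p :: "nat \<Rightarrow> real poly"
  assumes w_meas: "w \<in> borel_measurable borel"
    and w_nonneg: "\<And>x. w x \<ge> 0"
    and w_sym: "\<And>x. w (- x) = w x"
    and mu_def: "\<mu> = density lborel (\<lambda>x. ennreal (w x))"
    and deg_p: "\<And>n. degree (p n) = n"
    and orth_int: "\<And>m n. integrable \<mu> (\<lambda>x. poly (p m) x * poly (p n) x)"
    and orthonormal: "\<And>m n. (\<integral>x. poly (p m) x * poly (p n) x \<partial>\<mu>) = (if m = n then 1 else 0)"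
  shows "pcompose (p n) [:0,-1:] = smult ((-1)^n) (p n)"
proof -
  have nz: "p k \<noteq> 0" for k
  proof
    assume "p k = 0"
    then have "(\<integral>x. poly (p k) x * poly (p k) x \<partial>\<mu>) = 0" by simp
    with orthonormal[of k k] show False by simp
  qed
  define q where "q k = pcompose (p k) [:0,-1:]" for k
  have degq: "degree (q k) = k" for k
    unfolding q_def by (simp add: degree_pcompose deg_p)
  have polyq: "poly (q k) x = poly (p k) (-x)" for k x
    unfolding q_def by (simp add: poly_pcompose)
  have expand: "(\<integral>x. poly (\<Sum>k\<le>N. smult (c k) (p k)) x * poly (p m) x \<partial>\<mu>) = (if m \<le> N then c m else 0)"
    for c N m
  proof -
    have "(\<integral>x. poly (\<Sum>k\<le>N. smult (c k) (p k)) x * poly (p m) x \<partial>\<mu>)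
        = (\<integral>x. (\<Sum>k\<le>N. c k * (poly (p k) x * poly (p m) x)) \<partial>\<mu>)"
      by (simp add: poly_sum sum_distrib_right mult.assoc)
    also have "\<dots> = (\<Sum>k\<le>N. c k * (\<integral>x. poly (p k) x * poly (p m) x \<partial>\<mu>))"
      by (subst Bochner_Integration.integral_sum) (auto intro!: integrable_mult_right orth_int)
    also have "\<dots> = (\<Sum>k\<le>N. if k = m then c k else 0)"
      by (intro sum.cong) (auto simp: orthonormal)
    also have "\<dots> = (if m \<le> N then c m else 0)"
      by (simp add: sum.delta)
    finally show ?thesis .
  qed
  obtain c where c: "q n = (\<Sum>k\<le>n. smult (c k) (p k))"
    using span_p[OF deg_p nz, of "q n" n] degq by auto
  have cz: "c m = 0" if "m < n" for m
  proof -
    obtain d where d: "q m = (\<Sum>k\<le>m. smult (d k) (p k))"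
      using span_p[OF deg_p nz, of "q m" m] degq by auto
    have meas: "(\<lambda>x. poly (p n) x * poly (q m) x) \<in> borel_measurable borel"
      by (intro borel_measurable_continuous_onI continuous_intros)
    have "c m = (\<integral>x. poly (q n) x * poly (p m) x \<partial>\<mu>)"
      using expand[of c n m] c that by simp
    also have "\<dots> = (\<integral>x. poly (p n) (-x) * poly (q m) (-x) \<partial>\<mu>)"
      by (simp add: polyq)
    also have "\<dots> = (\<integral>x. poly (p n) x * poly (q m) x \<partial>\<mu>)"
      unfolding mu_def
      using reflect_integral[OF w_meas w_nonneg w_sym meas] by simp
    also have "\<dots> = (\<integral>x. poly (q m) x * poly (p n) x \<partial>\<mu>)"
      by (simp add: mult.commute)
    also have "\<dots> = 0" using expand[of d m n] d that by simp
    finally show ?thesis .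
  qed
  have qn: "q n = smult (c n) (p n)"
  proof -
    have "q n = (\<Sum>k\<in>insert n {..<n}. smult (c k) (p k))"
      using c by (simp add: lessThan_Suc_atMost[symmetric] lessThan_Suc)
    also have "\<dots> = smult (c n) (p n)"
      using cz by simp
    finally show ?thesis .
  qed
  have "coeff (q n) n = (-1)^n * coeff (p n) n"
    unfolding q_def by (simp add: coeff_pcompose_linear)
  moreover have "coeff (p n) n \<noteq> 0" using nz deg_p by (metis leading_coeff_0_iff)
  ultimately have "c n = (-1)^n" using qn by simp
  then show ?thesis using qn q_def by simp
qed

lemma coeff_parity:
  assumes "pcompose P [:0,-1:] = smult ((-1)^n) P" and "odd (n + k)"
  shows "coeff (P::real poly) k = 0"
proof -
  have "(-1)^k * coeff P k = (-1)^n * coeff P k"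
    using arg_cong[OF assms(1), of "\<lambda>q. coeff q k"] by (simp add: coeff_pcompose_linear)
  moreover have "(-1::real)^k \<noteq> (-1)^n"
    using assms(2) by (metis even_add neg_one_even_power neg_one_odd_power one_neq_neg_one)
  ultimately show ?thesis by (metis mult_cancel_right)
qed



lemma cesaro_ratio:
  fixes x y :: "nat \<Rightarrow> real"
  assumes ypos: "\<And>i. y i > 0"
    and Binf: "filterlim (\<lambda>n. \<Sum>i<n. y i) at_top sequentially"
    and rat: "(\<lambda>i. x i / y i) \<longlonglongrightarrow> L"
  shows "(\<lambda>n. (\<Sum>i<n. x i) / (\<Sum>i<n. y i)) \<longlonglongrightarrow> L"
proof (rule LIMSEQ_I)
  fix \<epsilon> :: real assume ep: "\<epsilon> > 0"
  obtain N where N: "\<And>i. i \<ge> N \<Longrightarrow> norm (x i / y i - L) < \<epsilon>/2"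
    using LIMSEQ_D[OF rat, of "\<epsilon>/2"] ep by auto
  have bnd: "\<bar>x i - L * y i\<bar> \<le> \<epsilon>/2 * y i" if "i \<ge> N" for i
  proof -
    have "\<bar>x i - L * y i\<bar> = \<bar>x i / y i - L\<bar> * y i"
      using ypos[of i] by (simp add: abs_mult field_simps)
    also have "\<dots> \<le> \<epsilon>/2 * y i" using N[OF that] ypos[of i] by (intro mult_right_mono) auto
    finally show ?thesis .
  qed
  define K where "K = \<bar>\<Sum>i<N. x i - L * y i\<bar>"
  have "\<forall>\<^sub>F n in sequentially. (\<Sum>i<n. y i) > 2 * K / \<epsilon> + 1"
    using Binf by (simp add: filterlim_at_top_dense)
  moreover have "\<forall>\<^sub>F n in sequentially. n \<ge> N" by (rule eventually_ge_at_top)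
  ultimately have "\<forall>\<^sub>F n in sequentially. (\<Sum>i<n. y i) > 2 * K / \<epsilon> + 1 \<and> n \<ge> N"
    by (rule eventually_conj)
  then obtain M where M: "\<And>n. n \<ge> M \<Longrightarrow> (\<Sum>i<n. y i) > 2 * K / \<epsilon> + 1 \<and> n \<ge> N"
    by (auto simp: eventually_sequentially)
  show "\<exists>no. \<forall>n\<ge>no. norm ((\<Sum>i<n. x i) / (\<Sum>i<n. y i) - L) < \<epsilon>"
  proof (intro exI allI impI)
    fix n assume "n \<ge> M"
    with M have Bn: "(\<Sum>i<n. y i) > 2 * K / \<epsilon> + 1" and nN: "n \<ge> N" by auto
    define B where "B = (\<Sum>i<n. y i)"
    have Bpos: "B > 0" unfolding B_def using Bn ep K_def
      by (smt (verit) divide_nonneg_pos abs_ge_zero)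
    have split: "{..<n} = {..<N} \<union> {N..<n}" using nN by auto
    have "\<bar>(\<Sum>i<n. x i) - L * B\<bar> = \<bar>\<Sum>i<n. x i - L * y i\<bar>"
      by (simp add: B_def sum_subtractf sum_distrib_left)
    also have "\<dots> = \<bar>(\<Sum>i<N. x i - L * y i) + (\<Sum>i=N..<n. x i - L * y i)\<bar>"
      by (simp only: split, subst sum.union_disjoint) auto
    also have "\<dots> \<le> K + \<bar>\<Sum>i=N..<n. x i - L * y i\<bar>" unfolding K_def by (rule abs_triangle_ineq)
    also have "\<bar>\<Sum>i=N..<n. x i - L * y i\<bar> \<le> (\<Sum>i=N..<n. \<epsilon>/2 * y i)"
      by (rule order_trans[OF sum_abs]) (intro sum_mono bnd, simp)
    also have "(\<Sum>i=N..<n. \<epsilon>/2 * y i) \<le> \<epsilon>/2 * B"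
    proof -
      have "(\<Sum>i=N..<n. y i) \<le> B" unfolding B_def
        by (rule sum_mono2) (auto intro: less_imp_le[OF ypos])
      then have "\<epsilon>/2 * (\<Sum>i=N..<n. y i) \<le> \<epsilon>/2 * B" using ep by (intro mult_left_mono) auto
      then show ?thesis by (simp only: sum_distrib_left)
    qed
    finally have ineq: "\<bar>(\<Sum>i<n. x i) - L * B\<bar> \<le> K + \<epsilon>/2 * B" by simp
    have "norm ((\<Sum>i<n. x i) / B - L) = \<bar>(\<Sum>i<n. x i) - L * B\<bar> / B"
      using Bpos by (simp add: field_simps)
    also have "\<dots> \<le> (K + \<epsilon>/2 * B) / B" using ineq Bpos by (simp add: divide_right_mono)
    also have "\<dots> = K / B + \<epsilon>/2" using Bpos by (simp add: field_simps)
    also have "K / B < \<epsilon>/2"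
    proof -
      have "2 * K / \<epsilon> < B" using Bn B_def by simp
      then have "2 * K < \<epsilon> * B" using ep by (simp add: field_simps)
      then show ?thesis using Bpos by (simp add: field_simps)
    qed
    finally show "norm ((\<Sum>i<n. x i) / (\<Sum>i<n. y i) - L) < \<epsilon>" unfolding B_def by simp
  qed
qed

lemma r2_lemma:
  assumes s: "s > -1"
  shows "(\<lambda>i::nat. real i powr s / ((1 + real i) powr (s+1) - real i powr (s+1))) \<longlonglongrightarrow> inverse (s+1)"
  using s by real_asymp

lemma power_sum_asym:
  fixes g :: "nat \<Rightarrow> real"
  assumes s: "s > -1" and lim: "(\<lambda>i. g i / real i powr s) \<longlonglongrightarrow> L"
  shows "(\<lambda>n. (\<Sum>i<n. g i) / real n powr (s+1)) \<longlonglongrightarrow> L / (s+1)"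
proof -
  define y where "y i = real (Suc i) powr (s+1) - real i powr (s+1)" for i
  have ypos: "y i > 0" for i
  proof -
    have "real i powr (s+1) < real (Suc i) powr (s+1)"
      by (rule powr_less_mono2) (use s in auto)
    then show ?thesis unfolding y_def by linarith
  qed
  have tel: "(\<Sum>i<n. y i) = real n powr (s+1)" for n
  proof -
    have "(\<Sum>i<n. y i) = real n powr (s+1) - real 0 powr (s+1)"
      unfolding y_def by (rule sum_lessThan_telescope)
    then show ?thesis using s by simp
  qed
  have Binf: "filterlim (\<lambda>n. \<Sum>i<n. y i) at_top sequentially"
    unfolding tel using s by real_asymp
  have r2: "(\<lambda>i. real i powr s / y i) \<longlonglongrightarrow> inverse (s+1)"
  proof -
    have yi: "y i = (1 + real i) powr (s+1) - real i powr (s+1)" for i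
      unfolding y_def by (simp del: powr_add)
    have r2': "(\<lambda>i::nat. real i powr s / ((1 + real i) powr (s+1) - real i powr (s+1))) \<longlonglongrightarrow> inverse (s+1)"
      using r2_lemma[OF s] .
    show ?thesis using r2' by (simp only: yi)
  qed
  have "(\<lambda>i. (g i / real i powr s) * (real i powr s / y i)) \<longlonglongrightarrow> L * inverse (s+1)"
    by (intro tendsto_mult lim r2)
  moreover have "\<forall>\<^sub>F i in sequentially. (g i / real i powr s) * (real i powr s / y i) = g i / y i"
    using eventually_gt_at_top[of 0] by eventually_elim simp
  ultimately have "(\<lambda>i. g i / y i) \<longlonglongrightarrow> L * inverse (s+1)"
    by (rule Lim_transform_eventually)
  from cesaro_ratio[OF ypos Binf this] show ?thesis
    unfolding tel by (simp add: divide_inverse)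
qed

lemma shift_ratio:
  fixes f :: "nat \<Rightarrow> real"
  assumes "(\<lambda>n. f n / real n powr a) \<longlonglongrightarrow> L"
  shows "(\<lambda>n. f (n + r) / real n powr a) \<longlonglongrightarrow> L"
proof -
  have "(\<lambda>n. f (n + r) / real (n + r) powr a) \<longlonglongrightarrow> L"
    using LIMSEQ_ignore_initial_segment[OF assms, of r] by simp
  moreover have "(\<lambda>n. (real n + real r) powr a / real n powr a) \<longlonglongrightarrow> 1" by real_asymp
  ultimately have "(\<lambda>n. f (n + r) / real (n + r) powr a * ((real n + real r) powr a / real n powr a)) \<longlonglongrightarrow> L"
    using tendsto_mult by fastforce
  moreover have "\<forall>\<^sub>F n in sequentially. f (n + r) / real (n + r) powr a * ((real n + real r) powr a / real n powr a) = f (n + r) / real n powr a"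
    using eventually_gt_at_top[of 0] by eventually_elim simp
  ultimately show ?thesis by (rule Lim_transform_eventually)
qed

lemma sq_asym:
  fixes h :: "nat \<Rightarrow> real"
  assumes lim: "(\<lambda>n. h n / (C * (-1) ^ n * real n powr e)) \<longlonglongrightarrow> 1"
  shows "(\<lambda>n. (h n)^2 / real n powr (2*e)) \<longlonglongrightarrow> C^2"
proof -
  have C: "C \<noteq> 0"
  proof
    assume "C = 0"
    then have "(\<lambda>n. 0::real) \<longlonglongrightarrow> 1" using lim by simp
    then show False using LIMSEQ_unique[OF tendsto_const] by fastforce
  qed
  have "(\<lambda>n. (h n / (C * (-1) ^ n * real n powr e))^2 * C^2) \<longlonglongrightarrow> C^2"
    using tendsto_mult[OF tendsto_power[OF lim, of 2] tendsto_const[of "C^2"]] by simp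
  moreover have "\<forall>\<^sub>F n in sequentially. (h n / (C * (-1) ^ n * real n powr e))^2 * C^2 = (h n)^2 / real n powr (2*e)"
    using eventually_gt_at_top[of 0]
  proof eventually_elim
    case (elim n)
    have "(real n powr e)^2 = real n powr (2*e)"
      by (simp add: powr_powr[symmetric] powr_realpow[symmetric] mult.commute)
    moreover have "((-1::real) ^ n)^2 = 1" by (simp add: power_mult[symmetric] mult.commute[of n])
    ultimately show ?case using C elim by (simp add: power_divide power_mult_distrib)
  qed
  ultimately show ?thesis by (rule Lim_transform_eventually)
qed



lemma ra1: "(\<lambda>i::nat. (g * (4 * real j + 8 * real i + 4) + 2 * d) / real i) \<longlonglongrightarrow> 8 * g"
  by real_asymp

lemma ra2: assumes "2*e+1 > (0::real)"
  shows "(\<lambda>n::nat. (g * (real j + 2 * real n)^2 + d * (real j + 2 * real n)) / real n powr (2*e+3)) \<longlonglongrightarrow> 0"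
  using assms by real_asymp

lemma ra3: assumes "2*e+1 > (0::real)"
  shows "(\<lambda>n::nat. (d * (real j + 2 * real n)) / real n powr (2*(e+1))) \<longlonglongrightarrow> 0"
  using assms by real_asymp

lemma sum_shift1: "(\<Sum>i=1..n. F i) = (\<Sum>i<n. F (Suc i))"
  by (induction n) auto

lemma final_asym:
  fixes lam :: "nat \<Rightarrow> real" and kern u :: "nat \<Rightarrow> real" and e \<gamma> \<delta> M Csq :: real
  assumes lam_form: "\<And>n. lam n = \<gamma> * (real n)\<^sup>2 + \<delta> * real n"
    and e: "2*e + 1 > 0"
    and ulim: "(\<lambda>l. u l / real l powr (2*e)) \<longlonglongrightarrow> Csq"
    and kern: "\<And>i. i \<ge> 1 \<Longrightarrow> kern i = (\<Sum>l<i. u l)"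
  shows "\<gamma> \<noteq> 0 \<longrightarrow> (\<lambda>n. (lam (j + 2*n) + M * (\<Sum>i=1..n. (lam (j+2*i) - lam (j+2*i-2)) * kern i)) / real n powr (2*e+3))
            \<longlonglongrightarrow> 8*\<gamma>*M*Csq/((2*e+3)*(2*e+1))"
    and "\<gamma> = 0 \<longrightarrow> (\<lambda>n. (lam (j + 2*n) + M * (\<Sum>i=1..n. (lam (j+2*i) - lam (j+2*i-2)) * kern i)) / real n powr (2*(e+1)))
            \<longlonglongrightarrow> \<delta>*M*Csq/((e+1)*(2*e+1))"
proof -
  define T where "T i = (\<Sum>l<i. u l)" for i
  have s0: "2*e > -1" using e by simp
  have T1: "(\<lambda>i. T i / real i powr (2*e+1)) \<longlonglongrightarrow> Csq / (2*e+1)"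
    unfolding T_def using power_sum_asym[OF s0 ulim] by simp
  have T2: "(\<lambda>i. T (i+1) / real i powr (2*e+1)) \<longlonglongrightarrow> Csq / (2*e+1)"
    by (rule shift_ratio[OF T1])
  define D where "D i = \<gamma> * (4 * real j + 8 * real i + 4) + 2 * \<delta>" for i
  have alpha: "(\<Sum>i=1..n. (lam (j+2*i) - lam (j+2*i-2)) * kern i) = (\<Sum>i<n. D i * T (i+1))" for n
  proof -
    have "(\<Sum>i=1..n. (lam (j+2*i) - lam (j+2*i-2)) * kern i)
        = (\<Sum>i<n. (lam (j+2*Suc i) - lam (j+2*Suc i-2)) * kern (Suc i))" by (rule sum_shift1)
    also have "\<dots> = (\<Sum>i<n. D i * T (i+1))"
    proof (intro sum.cong refl)
      fix i
      have "j + 2 * Suc i - 2 = j + 2 * i" by simp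
      then have "lam (j+2*Suc i) - lam (j+2*Suc i-2) = D i"
        by (simp add: lam_form D_def power2_eq_square algebra_simps)
      then show "(lam (j+2*Suc i) - lam (j+2*Suc i-2)) * kern (Suc i) = D i * T (i+1)"
        using kern[of "Suc i"] by (simp add: T_def)
    qed
    finally show ?thesis .
  qed
  have lamj: "lam (j + 2*n) = \<gamma> * (real j + 2 * real n)^2 + \<delta> * (real j + 2 * real n)" for n
    by (simp add: lam_form)
  show "\<gamma> \<noteq> 0 \<longrightarrow> (\<lambda>n. (lam (j + 2*n) + M * (\<Sum>i=1..n. (lam (j+2*i) - lam (j+2*i-2)) * kern i)) / real n powr (2*e+3))
            \<longlonglongrightarrow> 8*\<gamma>*M*Csq/((2*e+3)*(2*e+1))"
  proof
    have s1: "2*e+2 > -1" using e by simp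
    have "(\<lambda>i. (D i / real i) * (T (i+1) / real i powr (2*e+1))) \<longlonglongrightarrow> 8*\<gamma> * (Csq / (2*e+1))"
      by (intro tendsto_mult T2) (unfold D_def, rule ra1)
    moreover have "\<forall>\<^sub>F i in sequentially. (D i / real i) * (T (i+1) / real i powr (2*e+1)) = D i * T (i+1) / real i powr (2*e+2)"
      using eventually_gt_at_top[of 0]
    proof eventually_elim
      case (elim i)
      have "real i powr (2*e+2) = real i powr (1 + (2*e+1))" by (simp add: algebra_simps)
      also have "\<dots> = real i * real i powr (2*e+1)" using elim by (subst powr_add) simp
      finally have "real i powr (2*e+2) = real i * real i powr (2*e+1)" .
      then show ?case using elim by simp
    qed
    ultimately have g: "(\<lambda>i. D i * T (i+1) / real i powr (2*e+2)) \<longlonglongrightarrow> 8*\<gamma> * (Csq / (2*e+1))"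
      by (rule Lim_transform_eventually)
    have A: "(\<lambda>n. (\<Sum>i<n. D i * T (i+1)) / real n powr (2*e+3)) \<longlonglongrightarrow> 8*\<gamma> * (Csq / (2*e+1)) / (2*e+3)"
      using power_sum_asym[OF s1 g] by (simp add: add.assoc)
    have "(\<lambda>n. lam (j + 2*n) / real n powr (2*e+3) + M * ((\<Sum>i<n. D i * T (i+1)) / real n powr (2*e+3)))
          \<longlonglongrightarrow> 0 + M * (8*\<gamma> * (Csq / (2*e+1)) / (2*e+3))"
      by (intro tendsto_add tendsto_mult tendsto_const A) (unfold lamj, rule ra2[OF e])
    moreover have "0 + M * (8*\<gamma> * (Csq / (2*e+1)) / (2*e+3)) = 8*\<gamma>*M*Csq/((2*e+3)*(2*e+1))"
      by (simp add: mult.commute mult.left_commute)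
    moreover have "(\<lambda>n. (lam (j + 2*n) + M * (\<Sum>i<n. D i * T (i+1))) / real n powr (2*e+3))
       = (\<lambda>n. lam (j + 2*n) / real n powr (2*e+3) + M * ((\<Sum>i<n. D i * T (i+1)) / real n powr (2*e+3)))"
      by (simp add: fun_eq_iff add_divide_distrib)
    ultimately show "(\<lambda>n. (lam (j + 2*n) + M * (\<Sum>i=1..n. (lam (j+2*i) - lam (j+2*i-2)) * kern i)) / real n powr (2*e+3))
            \<longlonglongrightarrow> 8*\<gamma>*M*Csq/((2*e+3)*(2*e+1))"
      unfolding alpha by metis
  qed
  show "\<gamma> = 0 \<longrightarrow> (\<lambda>n. (lam (j + 2*n) + M * (\<Sum>i=1..n. (lam (j+2*i) - lam (j+2*i-2)) * kern i)) / real n powr (2*(e+1)))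
            \<longlonglongrightarrow> \<delta>*M*Csq/((e+1)*(2*e+1))"
  proof
    assume g0: "\<gamma> = 0"
    have s1: "2*e+1 > -1" using e by simp
    have "(\<lambda>i. (2*\<delta>) * (T (i+1) / real i powr (2*e+1))) \<longlonglongrightarrow> 2*\<delta> * (Csq / (2*e+1))"
      by (intro tendsto_mult T2 tendsto_const)
    moreover have Dd: "D i = 2*\<delta>" for i
      using g0 by (simp add: D_def)
    ultimately have g: "(\<lambda>i. D i * T (i+1) / real i powr (2*e+1)) \<longlonglongrightarrow> 2*\<delta> * (Csq / (2*e+1))"
      by (simp add: Dd)
    have ex: "2*e+1+1 = 2*(e+1)" by simp
    have A: "(\<lambda>n. (\<Sum>i<n. D i * T (i+1)) / real n powr (2*(e+1))) \<longlonglongrightarrow> 2*\<delta> * (Csq / (2*e+1)) / (2*e+1+1)"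
      using power_sum_asym[OF s1 g] unfolding ex .
    have lamj0: "lam (j + 2*n) = \<delta> * (real j + 2 * real n)" for n
      using g0 by (simp add: lam_form)
    have "(\<lambda>n. lam (j + 2*n) / real n powr (2*(e+1)) + M * ((\<Sum>i<n. D i * T (i+1)) / real n powr (2*(e+1))))
          \<longlonglongrightarrow> 0 + M * (2*\<delta> * (Csq / (2*e+1)) / (2*e+1+1))"
      by (intro tendsto_add tendsto_mult tendsto_const A) (unfold lamj0, rule ra3[OF e])
    moreover have "0 + M * (2*\<delta> * (Csq / (2*e+1)) / (2*e+1+1)) = \<delta>*M*Csq/((e+1)*(2*e+1))"
    proof -
      have "e+1 \<noteq> 0" "2*e+1 \<noteq> 0" "2*e+1+1 \<noteq> 0" using e by linarith+
      moreover have "\<And>a b::real. a \<noteq> 0 \<Longrightarrow> b \<noteq> 0 \<Longrightarrow> 0 + M*(2*\<delta>*(Csq/a)/(2*b)) = \<delta>*M*Csq/(b*a)"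
        by (simp add: field_simps)
      ultimately show ?thesis unfolding ex by blast
    qed
    moreover have "(\<lambda>n. (lam (j + 2*n) + M * (\<Sum>i<n. D i * T (i+1))) / real n powr (2*(e+1)))
       = (\<lambda>n. lam (j + 2*n) / real n powr (2*(e+1)) + M * ((\<Sum>i<n. D i * T (i+1)) / real n powr (2*(e+1))))"
      by (simp add: fun_eq_iff add_divide_distrib)
    ultimately show "(\<lambda>n. (lam (j + 2*n) + M * (\<Sum>i=1..n. (lam (j+2*i) - lam (j+2*i-2)) * kern i)) / real n powr (2*(e+1)))
            \<longlonglongrightarrow> \<delta>*M*Csq/((e+1)*(2*e+1))"
      unfolding alpha by metis
  qed
qed


theorem theorem2:
  fixes w :: "real \<Rightarrow> real" and \<mu> :: "real measure"
    and p :: "nat \<Rightarrow> real poly" and \<sigma> \<tau> :: "real poly"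
    and lam :: "nat \<Rightarrow> real" and \<gamma> \<delta> M :: real and j r :: nat
    and a1 b1 a2 b2 :: real and C1 C2 :: "nat \<Rightarrow> real"
  assumes w_meas: "w \<in> borel_measurable borel"
    and w_nonneg: "\<And>x. w x \<ge> 0"
    and w_sym: "\<And>x. w (- x) = w x"
    and mu_def: "\<mu> = density lborel (\<lambda>x. ennreal (w x))"
    and deg_p: "\<And>n. degree (p n) = n"
    and orth_int: "\<And>m n. integrable \<mu> (\<lambda>x. poly (p m) x * poly (p n) x)"
    and orthonormal: "\<And>m n. (\<integral>x. poly (p m) x * poly (p n) x \<partial>\<mu>) = (if m = n then 1 else 0)"
    and deg_sigma: "degree \<sigma> \<le> 2" and deg_tau: "degree \<tau> \<le> 1"
    and eigen: "\<And>n. \<sigma> * pderiv (pderiv (p n)) + \<tau> * pderiv (p n) = smult (lam n) (p n)"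
    and lam_form: "\<And>n. lam n = \<gamma> * (real n)\<^sup>2 + \<delta> * real n"
    and M_pos: "M > 0"
    and asym1: "\<And>k. (\<lambda>n. poly ((pderiv ^^ (2*k)) (p (2*n))) 0
                     / (C1 k * (-1) ^ n * real n powr (a1 * real k + b1))) \<longlonglongrightarrow> 1"
    and asym2: "\<And>k. (\<lambda>n. poly ((pderiv ^^ (2*k+1)) (p (2*n+1))) 0
                     / (C2 k * (-1) ^ n * real n powr (a2 * real k + b2))) \<longlonglongrightarrow> 1"
    and pos1: "\<And>k. 2 * (a1 * real k + b1) + 1 > 0"
    and pos2: "\<And>k. 2 * (a2 * real k + b2) + 1 > 0"
  shows
   "(j = 2*r \<longrightarrow>
      (\<gamma> \<noteq> 0 \<longrightarrow>
        (\<lambda>n. lam_tilde p lam M j n / real n powr (2 * (a1 * real r + b1) + 3))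
          \<longlonglongrightarrow> 8 * \<gamma> * M * (C1 r)\<^sup>2
               / ((2 * (a1 * real r + b1) + 3) * (2 * (a1 * real r + b1) + 1))) \<and>
      (\<gamma> = 0 \<longrightarrow>
        (\<lambda>n. lam_tilde p lam M j n / real n powr (2 * (a1 * real r + b1 + 1)))
          \<longlonglongrightarrow> \<delta> * M * (C1 r)\<^sup>2
               / ((a1 * real r + b1 + 1) * (2 * (a1 * real r + b1) + 1)))) \<and>
    (j = 2*r + 1 \<longrightarrow>
      (\<gamma> \<noteq> 0 \<longrightarrow>
        (\<lambda>n. lam_tilde p lam M j n / real n powr (2 * (a2 * real r + b2) + 3))
          \<longlonglongrightarrow> 8 * \<gamma> * M * (C2 r)\<^sup>2
               / ((2 * (a2 * real r + b2) + 3) * (2 * (a2 * real r + b2) + 1))) \<and>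
      (\<gamma> = 0 \<longrightarrow>
        (\<lambda>n. lam_tilde p lam M j n / real n powr (2 * (a2 * real r + b2 + 1)))
          \<longlonglongrightarrow> \<delta> * M * (C2 r)\<^sup>2
               / ((a2 * real r + b2 + 1) * (2 * (a2 * real r + b2) + 1))))"
  proof -
  have par: "pcompose (p n) [:0,-1:] = smult ((-1)^n) (p n)" for n
    by (rule parity_p[OF w_meas w_nonneg w_sym mu_def deg_p orth_int orthonormal])
  define f where "f jj m = poly ((pderiv ^^ jj) (p m)) 0" for jj m
  have fc: "f jj m = pochhammer 1 jj * coeff (p m) jj" for jj m
    unfolding f_def by (simp add: poly_0_coeff_0 coeff_higher_pderiv)
  have f0: "f jj m = 0" if "m < jj \<or> odd (m + jj)" for jj m
  proof -
    have "coeff (p m) jj = 0"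
      using that
    proof
      assume "m < jj" then show ?thesis using deg_p[of m] by (intro coeff_eq_0) simp
    next
      assume "odd (m + jj)" then show ?thesis by (rule coeff_parity[OF par])
    qed
    then show ?thesis by (simp add: fc)
  qed
  have Gsum: "(\<Sum>m<jj+2*i. f jj m * f jj m) = (\<Sum>l<i. (f jj (jj+2*l))^2)" for jj i
  proof (induction i)
    case 0
    then show ?case using f0 by simp
  next
    case (Suc i)
    have "jj + 2 * Suc i = Suc (Suc (jj + 2*i))" by simp
    moreover have "f jj (Suc (jj + 2*i)) = 0" using f0 by simp
    ultimately show ?case using Suc.IH by (simp add: power2_eq_square)
  qed
  have kern: "kernel p (jj + 2*i - 1) jj jj 0 0 = (\<Sum>l<i. (f jj (jj+2*l))^2)" if "i \<ge> 1" for jj i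
  proof -
    have "{0..jj + 2*i - 1} = {..<jj+2*i}" using that by auto
    then show ?thesis unfolding kernel_def using Gsum[of jj i] by (simp add: f_def)
  qed
  have lt: "lam_tilde p lam M jj n = lam (jj + 2*n) + M * (\<Sum>i=1..n. (lam (jj+2*i) - lam (jj+2*i-2)) * kernel p (jj + 2*i - 1) jj jj 0 0)" for jj n
    unfolding lam_tilde_def sob_alpha_def ..
  show ?thesis
  proof (intro conjI impI)
    assume j: "j = 2*r"
    have e: "2 * (a1 * real r + b1) + 1 > 0" by (rule pos1)
    have "(\<lambda>n. (poly ((pderiv ^^ (2*r)) (p (2*n))) 0)^2 / real n powr (2 * (a1 * real r + b1))) \<longlonglongrightarrow> (C1 r)^2"
      by (rule sq_asym[OF asym1[of r]])
    from shift_ratio[OF this, of r]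
    have ul: "(\<lambda>l. (f j (j + 2*l))^2 / real l powr (2 * (a1 * real r + b1))) \<longlonglongrightarrow> (C1 r)^2"
      unfolding j f_def by (simp add: algebra_simps)
    note F = final_asym[OF lam_form e ul kern, of j]
    show "\<gamma> \<noteq> 0 \<Longrightarrow> (\<lambda>n. lam_tilde p lam M j n / real n powr (2 * (a1 * real r + b1) + 3))
          \<longlonglongrightarrow> 8 * \<gamma> * M * (C1 r)\<^sup>2 / ((2 * (a1 * real r + b1) + 3) * (2 * (a1 * real r + b1) + 1))"
      unfolding lt using F(1) by blast
    show "\<gamma> = 0 \<Longrightarrow> (\<lambda>n. lam_tilde p lam M j n / real n powr (2 * (a1 * real r + b1 + 1)))
          \<longlonglongrightarrow> \<delta> * M * (C1 r)\<^sup>2 / ((a1 * real r + b1 + 1) * (2 * (a1 * real r + b1) + 1))"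
      unfolding lt using F(2) by blast
  next
    assume j: "j = 2*r + 1"
    have e: "2 * (a2 * real r + b2) + 1 > 0" by (rule pos2)
    have "(\<lambda>n. (poly ((pderiv ^^ (2*r+1)) (p (2*n+1))) 0)^2 / real n powr (2 * (a2 * real r + b2))) \<longlonglongrightarrow> (C2 r)^2"
      by (rule sq_asym[OF asym2[of r]])
    from shift_ratio[OF this, of r]
    have ul: "(\<lambda>l. (f j (j + 2*l))^2 / real l powr (2 * (a2 * real r + b2))) \<longlonglongrightarrow> (C2 r)^2"
      unfolding j f_def by (simp add: algebra_simps)
    note F = final_asym[OF lam_form e ul kern, of j]
    show "\<gamma> \<noteq> 0 \<Longrightarrow> (\<lambda>n. lam_tilde p lam M j n / real n powr (2 * (a2 * real r + b2) + 3))
          \<longlonglongrightarrow> 8 * \<gamma> * M * (C2 r)\<^sup>2 / ((2 * (a2 * real r + b2) + 3) * (2 * (a2 * real r + b2) + 1))"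
      unfolding lt using F(1) by blast
    show "\<gamma> = 0 \<Longrightarrow> (\<lambda>n. lam_tilde p lam M j n / real n powr (2 * (a2 * real r + b2 + 1)))
          \<longlonglongrightarrow> \<delta> * M * (C2 r)\<^sup>2 / ((a2 * real r + b2 + 1) * (2 * (a2 * real r + b2) + 1))"
      unfolding lt using F(2) by blast
  qed
qed

end
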